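(* Let $K$ be an idempotent ordered TGP-$\omega$-valuation monoid, $AP$ a finite set of atomic propositions, $k\in K\setminus\{\mathbf{0},\mathbf{1}\}$ and $\varphi\in k\text{-}t\text{-}RULTL(K,AP)$. Then $\|\varphi\|:(\mathcal{P}(AP))^{\omega}\to K$ is $k$-safe.
   Context: Idempotent ordered TGP-$\omega$-valuation monoid $(K,+,\cdot,Val^{\omega},\mathbf{0},\mathbf{1})$: complete monoid $(K,+,\mathbf{0})$ (infinitary sums over arbitrary index sets with the usual axioms), idempotent, totally ordered by the natural order $k\le k'$ iff $k'=k'+k$; $Val^{\omega}$ maps finitely-valued sequences in $K$ to $K$; $\cdot$ has zero $\mathbf{0}$ and unit $\mathbf{1}$; $Val^{\omega}=\mathbf{0}$ if some entry is $\mathbf{0}$; $Val^{\omega}(\mathbf{1}^{\omega})=\mathbf{1}$; $\sum_I(k\cdot\mathbf{1})=k\cdot\sum_I\mathbf{1}$; $Val^{\omega}((\sum_{i_j\in I_j}k_{i_j})_j)=\sum_{(i_j)_j\in\prod_j I_j}Val^{\omega}((k_{i_j})_j)$ for finite $I_j$, $k_{i_j}$ in a finite $L\subseteq K$ with each family entirely in $L\setminus\{\mathbf{0},\mathbf{1}\}$ or entirely in $\{\mathbf{0},\mathbf{1}\}$; moreover $Val^{\omega}(\mathbf{1},k_1,\dots)=Val^{\omega}(k_1,\dots)$, $Val^{\omega}(k,\mathbf{1},\mathbf{1},\dots)=k$, $k\le\mathbf{1}$, and $k_i\ge k\ \forall i\Rightarrow Val^{\omega}((k_i)_i)\ge k$.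 Weighted LTL over $AP$ and $K$: $\varphi::=k\mid a\mid\neg a\mid\varphi\vee\varphi\mid\varphi\wedge\varphi\mid\bigcirc\varphi\mid\varphi U\varphi\mid\square\varphi$, with semantics: $(\|k\|,w)=k$; $(\|a\|,w)=\mathbf{1}$ if $a\in w(0)$ else $\mathbf{0}$; $\neg a$ dually; $\vee\mapsto+$, $\wedge\mapsto\cdot$ pointwise; $(\|\bigcirc\varphi\|,w)=(\|\varphi\|,w_{\ge1})$; $(\|\varphi U\psi\|,w)=\sum_{i\ge0}Val^{\omega}((\|\varphi\|,w_{\ge0}),\dots,(\|\varphi\|,w_{\ge i-1}),(\|\psi\|,w_{\ge i}),\mathbf{1},\mathbf{1},\dots)$; $(\|\square\varphi\|,w)=Val^{\omega}(((\|\varphi\|,w_{\ge i}))_{i\ge0})$. $true:=\mathbf{1}$, $\varphi\tilde U\psi:=\square\varphi\vee(\varphi U\psi)$. $sbLTL(K,AP)$: $\varphi::=true\mid a\mid\neg a\mid\varphi\vee\varphi\mid\varphi\wedge\varphi\mid\bigcirc\varphi\mid\varphi\tilde U\varphi\mid\square\varphi$. $L_k=\{k'\in K\mid k'\ge k\}$. $k\text{-}stLTL(K,AP)$: formulas $\bigvee_{1\le i\le n}(k_i\wedge\varphi_i)$, $k_i\in L_k\setminus\{\mathbf{0},\mathbf{1}\}$, $\varphi_i\in sbLTL(K,AP)$. $k\text{-}t\text{-}RULTL(K,AP)$ is the least class of formulas such that: (1) every $k'\in L_k$ is in it; (2) $sbLTL(K,AP)\subseteq$ it; (3) $k\text{-}stLTL(K,AP)\subseteq$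 it; (4) closed under $\bigcirc$; (5) closed under $\vee$; (6) if $\varphi\in sbLTL(K,AP)$ and $\psi\in k\text{-}stLTL(K,AP)$, or $\psi=\xi\tilde U\lambda$, or $\psi=\square\xi$ with $\xi,\lambda\in k\text{-}stLTL(K,AP)$, then $\varphi\wedge\psi,\psi\wedge\varphi$ are in it; (7) if $\varphi,\psi\in k\text{-}stLTL(K,AP)$ then $\varphi\tilde U\psi$ is in it; (8) if $\varphi\in k\text{-}stLTL(K,AP)$ then $\square\varphi$ is in it. A series $s$ is $k$-safe if for every $w$: whenever for every $i>0$ there is $u$ with $(s,w_{<i}u)\ge k$ ($w_{<i}$ the length-$i$ prefix), then $(s,w)\ge k$. *)

theory Defs
  imports Main
begin

text \<open>Infinitary sums are indexed by subsets of the fixed index type nat => nat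
  (this contains nat and all products of subsets of nat, which is what the
  semantics and the distributivity axiom need).\<close>

type_synonym idx = "nat \<Rightarrow> nat"

record 'k vmon =
  vplus :: "'k \<Rightarrow> 'k \<Rightarrow> 'k"
  vzero :: 'k
  vsum  :: "(idx \<Rightarrow> 'k) \<Rightarrow> idx set \<Rightarrow> 'k"
  vmult :: "'k \<Rightarrow> 'k \<Rightarrow> 'k"
  vone  :: 'k
  vval  :: "(nat \<Rightarrow> 'k) \<Rightarrow> 'k"

definition vle :: "'k vmon \<Rightarrow> 'k \<Rightarrow> 'k \<Rightarrow> bool" where
  "vle K a b \<longleftrightarrow> b = vplus K b a"

definition nsum :: "'k vmon \<Rightarrow> (nat \<Rightarrow> 'k) \<Rightarrow> nat set \<Rightarrow> 'k" where
  "nsum K f A = vsum K (\<lambda>x. f (x 0)) ((\<lambda>n. \<lambda>_::nat. n) ` A)"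

definition complete_monoid :: "'k vmon \<Rightarrow> bool" where
  "complete_monoid K \<longleftrightarrow>
     (\<forall>a b c. vplus K (vplus K a b) c = vplus K a (vplus K b c)) \<and>
     (\<forall>a b. vplus K a b = vplus K b a) \<and>
     (\<forall>a. vplus K a (vzero K) = a) \<and>
     (\<forall>f. vsum K f {} = vzero K) \<and>
     (\<forall>f x. vsum K f {x} = f x) \<and>
     (\<forall>f x y. x \<noteq> y \<longrightarrow> vsum K f {x, y} = vplus K (f x) (f y)) \<and>
     (\<forall>f g I. (\<forall>x\<in>I. f x = g x) \<longrightarrow> vsum K f I = vsum K g I) \<and>
     (\<forall>f (J :: idx set) (P :: idx \<Rightarrow> idx set).
        (\<forall>i\<in>J. \<forall>j\<in>J. i \<noteq> j \<longrightarrow> P i \<inter> P j = {}) \<longrightarrow>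
        vsum K (\<lambda>j. vsum K f (P j)) J = vsum K f (\<Union>j\<in>J. P j))"

definition fin_valued :: "(nat \<Rightarrow> 'k) \<Rightarrow> bool" where
  "fin_valued s \<longleftrightarrow> finite (range s)"

definition idem_ordered_tgp :: "'k vmon \<Rightarrow> bool" where
  "idem_ordered_tgp K \<longleftrightarrow>
     complete_monoid K \<and>
     (\<forall>a. vplus K a a = a) \<and>
     (\<forall>a b. vle K a b \<or> vle K b a) \<and>
     (\<forall>a. vmult K (vzero K) a = vzero K \<and> vmult K a (vzero K) = vzero K) \<and>
     (\<forall>a. vmult K (vone K) a = a \<and> vmult K a (vone K) = a) \<and>
     (\<forall>s. fin_valued s \<and> (\<exists>i. s i = vzero K) \<longrightarrow> vval K s = vzero K) \<and>
     vval K (\<lambda>_. vone K) = vone K \<and>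
     (\<forall>c I. vsum K (\<lambda>_. vmult K c (vone K)) I = vmult K c (vsum K (\<lambda>_. vone K) I)) \<and>
     (\<forall>(I :: nat \<Rightarrow> nat set) (kk :: nat \<Rightarrow> nat \<Rightarrow> 'k) (L :: 'k set).
        finite L \<and> (\<forall>j. finite (I j)) \<and> (\<forall>j. \<forall>i\<in>I j. kk j i \<in> L) \<and>
        (\<forall>j. (\<forall>i\<in>I j. kk j i \<notin> {vzero K, vone K}) \<or> (\<forall>i\<in>I j. kk j i \<in> {vzero K, vone K}))
        \<longrightarrow> vval K (\<lambda>j. nsum K (kk j) (I j))
            = vsum K (\<lambda>x. vval K (\<lambda>j. kk j (x j))) {x. \<forall>j. x j \<in> I j}) \<and>
     (\<forall>s. fin_valued s \<longrightarrow> vval K (\<lambda>n. if n = 0 then vone K else s (n - 1)) = vval K s) \<and>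
     (\<forall>c. vval K (\<lambda>n. if n = 0 then c else vone K) = c) \<and>
     (\<forall>c. vle K c (vone K)) \<and>
     (\<forall>s c. fin_valued s \<and> (\<forall>i. vle K c (s i)) \<longrightarrow> vle K c (vval K s))"

datatype ('k, 'a) ltl =
    Const 'k | Atom 'a | NAtom 'a
  | Or "('k, 'a) ltl" "('k, 'a) ltl" | And "('k, 'a) ltl" "('k, 'a) ltl"
  | Next "('k, 'a) ltl" | Until "('k, 'a) ltl" "('k, 'a) ltl" | Box "('k, 'a) ltl"

definition sfx :: "nat \<Rightarrow> (nat \<Rightarrow> 'b) \<Rightarrow> (nat \<Rightarrow> 'b)" where
  "sfx i w = (\<lambda>n. w (n + i))"

primrec sem :: "'k vmon \<Rightarrow> ('k, 'a) ltl \<Rightarrow> (nat \<Rightarrow> 'a set) \<Rightarrow> 'k" where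
  "sem K (Const c) w = c"
| "sem K (Atom a) w = (if a \<in> w 0 then vone K else vzero K)"
| "sem K (NAtom a) w = (if a \<in> w 0 then vzero K else vone K)"
| "sem K (Or \<phi> \<psi>) w = vplus K (sem K \<phi> w) (sem K \<psi> w)"
| "sem K (And \<phi> \<psi>) w = vmult K (sem K \<phi> w) (sem K \<psi> w)"
| "sem K (Next \<phi>) w = sem K \<phi> (sfx 1 w)"
| "sem K (Until \<phi> \<psi>) w =
     nsum K (\<lambda>i. vval K (\<lambda>n. if n < i then sem K \<phi> (sfx n w)
                              else if n = i then sem K \<psi> (sfx i w) else vone K)) UNIV"
| "sem K (Box \<phi>) w = vval K (\<lambda>i. sem K \<phi> (sfx i w))"

definition ltrue :: "'k vmon \<Rightarrow> ('k, 'a) ltl" where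
  "ltrue K = Const (vone K)"

definition rU :: "('k, 'a) ltl \<Rightarrow> ('k, 'a) ltl \<Rightarrow> ('k, 'a) ltl" where
  "rU \<phi> \<psi> = Or (Box \<phi>) (Until \<phi> \<psi>)"

inductive_set sbLTL :: "'k vmon \<Rightarrow> 'a set \<Rightarrow> ('k, 'a) ltl set" for K AP where
  sb_true: "ltrue K \<in> sbLTL K AP"
| sb_atom: "a \<in> AP \<Longrightarrow> Atom a \<in> sbLTL K AP"
| sb_natom: "a \<in> AP \<Longrightarrow> NAtom a \<in> sbLTL K AP"
| sb_or: "\<phi> \<in> sbLTL K AP \<Longrightarrow> \<psi> \<in> sbLTL K AP \<Longrightarrow> Or \<phi> \<psi> \<in> sbLTL K AP"
| sb_and: "\<phi> \<in> sbLTL K AP \<Longrightarrow> \<psi> \<in> sbLTL K AP \<Longrightarrow> And \<phi> \<psi> \<in> sbLTL K AP"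
| sb_next: "\<phi> \<in> sbLTL K AP \<Longrightarrow> Next \<phi> \<in> sbLTL K AP"
| sb_rU: "\<phi> \<in> sbLTL K AP \<Longrightarrow> \<psi> \<in> sbLTL K AP \<Longrightarrow> rU \<phi> \<psi> \<in> sbLTL K AP"
| sb_box: "\<phi> \<in> sbLTL K AP \<Longrightarrow> Box \<phi> \<in> sbLTL K AP"

definition Lk :: "'k vmon \<Rightarrow> 'k \<Rightarrow> 'k set" where
  "Lk K k = {k'. vle K k k'}"

text \<open>k-stLTL: finite nonempty disjunctions (any bracketing) of k_i \<and> \<phi>_i\<close>
inductive_set stLTL :: "'k vmon \<Rightarrow> 'a set \<Rightarrow> 'k \<Rightarrow> ('k, 'a) ltl set" for K AP k where
  st_base: "c \<in> Lk K k - {vzero K, vone K} \<Longrightarrow> \<phi> \<in> sbLTL K AP \<Longrightarrow> And (Const c) \<phi> \<in> stLTL K AP k"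
| st_or: "\<phi> \<in> stLTL K AP k \<Longrightarrow> \<psi> \<in> stLTL K AP k \<Longrightarrow> Or \<phi> \<psi> \<in> stLTL K AP k"

inductive_set tRULTL :: "'k vmon \<Rightarrow> 'a set \<Rightarrow> 'k \<Rightarrow> ('k, 'a) ltl set" for K AP k where
  t_const: "c \<in> Lk K k \<Longrightarrow> Const c \<in> tRULTL K AP k"
| t_sb: "\<phi> \<in> sbLTL K AP \<Longrightarrow> \<phi> \<in> tRULTL K AP k"
| t_st: "\<phi> \<in> stLTL K AP k \<Longrightarrow> \<phi> \<in> tRULTL K AP k"
| t_next: "\<phi> \<in> tRULTL K AP k \<Longrightarrow> Next \<phi> \<in> tRULTL K AP k"
| t_or: "\<phi> \<in> tRULTL K AP k \<Longrightarrow> \<psi> \<in> tRULTL K AP k \<Longrightarrow> Or \<phi> \<psi> \<in> tRULTL K AP k"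
| t_and1: "\<phi> \<in> sbLTL K AP \<Longrightarrow>
     \<psi> \<in> stLTL K AP k
     \<or> (\<exists>\<xi> \<zeta>. \<xi> \<in> stLTL K AP k \<and> \<zeta> \<in> stLTL K AP k \<and> \<psi> = rU \<xi> \<zeta>)
     \<or> (\<exists>\<xi>. \<xi> \<in> stLTL K AP k \<and> \<psi> = Box \<xi>) \<Longrightarrow> And \<phi> \<psi> \<in> tRULTL K AP k"
| t_and2: "\<phi> \<in> sbLTL K AP \<Longrightarrow>
     \<psi> \<in> stLTL K AP k
     \<or> (\<exists>\<xi> \<zeta>. \<xi> \<in> stLTL K AP k \<and> \<zeta> \<in> stLTL K AP k \<and> \<psi> = rU \<xi> \<zeta>)
     \<or> (\<exists>\<xi>. \<xi> \<in> stLTL K AP k \<and> \<psi> = Box \<xi>) \<Longrightarrow> And \<psi> \<phi> \<in> tRULTL K AP k"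
| t_rU: "\<phi> \<in> stLTL K AP k \<Longrightarrow> \<psi> \<in> stLTL K AP k \<Longrightarrow> rU \<phi> \<psi> \<in> tRULTL K AP k"
| t_box: "\<phi> \<in> stLTL K AP k \<Longrightarrow> Box \<phi> \<in> tRULTL K AP k"

definition conc :: "(nat \<Rightarrow> 'b) \<Rightarrow> nat \<Rightarrow> (nat \<Rightarrow> 'b) \<Rightarrow> (nat \<Rightarrow> 'b)" where
  "conc w i u = (\<lambda>n. if n < i then w n else u (n - i))"

definition k_safe :: "'k vmon \<Rightarrow> 'a set \<Rightarrow> 'k \<Rightarrow> ((nat \<Rightarrow> 'a set) \<Rightarrow> 'k) \<Rightarrow> bool" where
  "k_safe K AP k s \<longleftrightarrow>
     (\<forall>w. (\<forall>n. w n \<subseteq> AP) \<longrightarrow>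
        (\<forall>i>0. \<exists>u. (\<forall>n. u n \<subseteq> AP) \<and> vle K k (s (conc w i u))) \<longrightarrow>
        vle K k (s w))"

end

theory Submission
  imports Defs
begin

definition safeP :: "'a set \<Rightarrow> ((nat \<Rightarrow> 'a set) \<Rightarrow> bool) \<Rightarrow> bool" where
 "safeP AP P \<longleftrightarrow> (\<forall>w. (\<forall>n. w n \<subseteq> AP) \<longrightarrow>
     (\<forall>i>0. \<exists>u. (\<forall>n. u n \<subseteq> AP) \<and> P (conc w i u)) \<longrightarrow> P w)"

lemma conc_sfx: "j \<le> i \<Longrightarrow> conc w j (sfx j (conc w i u)) = conc w i u"
  by (auto simp: conc_def sfx_def fun_eq_iff)

lemma sfx_conc: "sfx j (conc w (i+j) u) = conc (sfx j w) i u"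
  by (auto simp: conc_def sfx_def fun_eq_iff)

lemma AP_conc: "\<forall>n. w n \<subseteq> AP \<Longrightarrow> \<forall>n. u n \<subseteq> AP \<Longrightarrow> \<forall>n. conc w i u n \<subseteq> AP"
  by (simp add: conc_def)

lemma AP_sfx: "\<forall>n. w n \<subseteq> AP \<Longrightarrow> \<forall>n. sfx j w n \<subseteq> AP"
  by (simp add: sfx_def)

lemma ext_mono:
  assumes "\<forall>n. w n \<subseteq> AP" "\<forall>n. u n \<subseteq> AP" "P (conc w i u)" "j \<le> i"
  shows "\<exists>u'. (\<forall>n. u' n \<subseteq> AP) \<and> P (conc w j u')"
proof (rule exI[of _ "sfx j (conc w i u)"], rule conjI)
  show "\<forall>n. sfx j (conc w i u) n \<subseteq> AP"
    by (rule AP_sfx[OF AP_conc[OF assms(1,2)]])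
  have "conc w j (sfx j (conc w i u)) = conc w i u" using conc_sfx assms(4) by blast
  then show "P (conc w j (sfx j (conc w i u)))" using assms(3) by simp
qed

lemma bad:
  assumes "safeP AP P" "\<forall>n. w n \<subseteq> AP" "\<not> P w"
  shows "\<exists>m. \<forall>M\<ge>m. \<forall>u. (\<forall>n. u n \<subseteq> AP) \<longrightarrow> \<not> P (conc w M u)"
proof -
  have h: "(\<forall>n. w n \<subseteq> AP) \<longrightarrow> (\<forall>i>0. \<exists>u. (\<forall>n. u n \<subseteq> AP) \<and> P (conc w i u)) \<longrightarrow> P w"
    using assms(1) unfolding safeP_def by (rule spec)
  have "\<not> (\<forall>i>0. \<exists>u. (\<forall>n. u n \<subseteq> AP) \<and> P (conc w i u))"
    using h assms(2,3) by blast
  then obtain i where i: "\<forall>u. (\<forall>n. u n \<subseteq> AP) \<longrightarrow> \<not> P (conc w i u)"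
    by blast
  show ?thesis
  proof (intro exI allI impI notI)
    fix M u assume iM: "i \<le> M" and u: "\<forall>n. u n \<subseteq> AP" and P: "P (conc w M u)"
    obtain u' where "\<forall>n. u' n \<subseteq> AP" "P (conc w i u')"
      using ext_mono[where P=P, OF assms(2) u P iM] by blast
    then show False using i by blast
  qed
qed

lemma safeD:
  assumes "safeP AP P" "\<forall>n. w n \<subseteq> AP" "\<And>i. i > 0 \<Longrightarrow> \<exists>u. (\<forall>n. u n \<subseteq> AP) \<and> P (conc w i u)"
  shows "P w"
proof -
  have h: "(\<forall>n. w n \<subseteq> AP) \<longrightarrow> (\<forall>i>0. \<exists>u. (\<forall>n. u n \<subseteq> AP) \<and> P (conc w i u)) \<longrightarrow> P w"
    using assms(1) unfolding safeP_def by (rule spec)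
  show ?thesis using h assms(2,3) by blast
qed

lemma safeI:
  assumes "\<And>w. \<forall>n. w n \<subseteq> AP \<Longrightarrow> (\<And>i. i > 0 \<Longrightarrow> \<exists>u. (\<forall>n. u n \<subseteq> AP) \<and> P (conc w i u)) \<Longrightarrow> P w"
  shows "safeP AP P"
  unfolding safeP_def using assms by blast

lemma safe_or:
  assumes "safeP AP P" "safeP AP Q"
  shows "safeP AP (\<lambda>w. P w \<or> Q w)"
proof (rule safeI, rule ccontr)
  fix w assume w: "\<forall>n. w n \<subseteq> AP"
      and ext: "\<And>i. i > 0 \<Longrightarrow> \<exists>u. (\<forall>n. u n \<subseteq> AP) \<and> (P (conc w i u) \<or> Q (conc w i u))"
      and nPQ: "\<not> (P w \<or> Q w)"
  then have nP: "\<not> P w" and nQ: "\<not> Q w" by auto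
  obtain m1 where m1: "\<forall>M\<ge>m1. \<forall>u. (\<forall>n. u n \<subseteq> AP) \<longrightarrow> \<not> P (conc w M u)"
    using bad[OF assms(1) w nP] by blast
  obtain m2 where m2: "\<forall>M\<ge>m2. \<forall>u. (\<forall>n. u n \<subseteq> AP) \<longrightarrow> \<not> Q (conc w M u)"
    using bad[OF assms(2) w nQ] by blast
  obtain u where u: "\<forall>n. u n \<subseteq> AP"
    and PQ: "P (conc w (Suc (max m1 m2)) u) \<or> Q (conc w (Suc (max m1 m2)) u)"
    using ext[of "Suc (max m1 m2)"] by blast
  have "m1 \<le> Suc (max m1 m2)" "m2 \<le> Suc (max m1 m2)" by auto
  then have "\<not> P (conc w (Suc (max m1 m2)) u)" "\<not> Q (conc w (Suc (max m1 m2)) u)"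
    using m1 m2 u by blast+
  then show False using PQ by blast
qed

lemma safe_and:
  assumes "safeP AP P" "safeP AP Q"
  shows "safeP AP (\<lambda>w. P w \<and> Q w)"
proof (rule safeI, rule conjI)
  fix w assume w: "\<forall>n. w n \<subseteq> AP"
      and ext: "\<And>i. i > 0 \<Longrightarrow> \<exists>u. (\<forall>n. u n \<subseteq> AP) \<and> (P (conc w i u) \<and> Q (conc w i u))"
  show "P w" by (rule safeD[OF assms(1) w]) (use ext in blast)
  show "Q w" by (rule safeD[OF assms(2) w]) (use ext in blast)
qed

lemma safe_all:
  assumes "\<And>x. safeP AP (P x)"
  shows "safeP AP (\<lambda>w. \<forall>x. P x w)"
proof (rule safeI, rule allI)
  fix w x assume w: "\<forall>n. w n \<subseteq> AP"
      and ext: "\<And>i. i > 0 \<Longrightarrow> \<exists>u. (\<forall>n. u n \<subseteq> AP) \<and> (\<forall>x. P x (conc w i u))"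
  show "P x w" by (rule safeD[OF assms w]) (use ext in blast)
qed

lemma safe_true: "safeP AP (\<lambda>w. True)"
  unfolding safeP_def by blast

lemma safe_atom: "safeP AP (\<lambda>w. a \<in> w 0)"
  unfolding safeP_def
proof (intro allI impI)
  fix w :: "nat \<Rightarrow> 'a set" assume "\<forall>i>0. \<exists>u. (\<forall>n. u n \<subseteq> AP) \<and> a \<in> conc w i u 0"
  then obtain u where "a \<in> conc w 1 u 0" by (meson zero_less_one)
  then show "a \<in> w 0" by (simp add: conc_def)
qed

lemma safe_natom: "safeP AP (\<lambda>w. a \<notin> w 0)"
  unfolding safeP_def
proof (intro allI impI)
  fix w :: "nat \<Rightarrow> 'a set" assume "\<forall>i>0. \<exists>u. (\<forall>n. u n \<subseteq> AP) \<and> a \<notin> conc w i u 0"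
  then obtain u where "a \<notin> conc w 1 u 0" by (meson zero_less_one)
  then show "a \<notin> w 0" by (simp add: conc_def)
qed

lemma safe_sfx:
  assumes "safeP AP P"
  shows "safeP AP (\<lambda>w. P (sfx j w))"
  unfolding safeP_def
proof (intro allI impI)
  fix w assume w: "\<forall>n. w n \<subseteq> AP"
    and ext: "\<forall>i>0. \<exists>u. (\<forall>n. u n \<subseteq> AP) \<and> P (sfx j (conc w i u))"
  have "\<forall>i>0. \<exists>u. (\<forall>n. u n \<subseteq> AP) \<and> P (conc (sfx j w) i u)"
  proof (intro allI impI)
    fix i :: nat assume "i > 0"
    have "i + j > 0" using \<open>i > 0\<close> by simp
    then obtain u where "\<forall>n. u n \<subseteq> AP" "P (sfx j (conc w (i+j) u))" using ext[rule_format, of "i+j"] by blast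
    then show "\<exists>u. (\<forall>n. u n \<subseteq> AP) \<and> P (conc (sfx j w) i u)" by (auto simp: sfx_conc)
  qed
  then show "P (sfx j w)" by (intro safeD[OF assms AP_sfx[OF w]]) blast
qed

lemma fin_comb: "(\<forall>i\<le>(j::nat). \<exists>m::nat. \<forall>M\<ge>m. R i M) \<Longrightarrow> \<exists>m::nat. \<forall>M\<ge>m. \<forall>i\<le>j. R i M"
proof (induction j)
  case 0 then show ?case by auto
next
  case (Suc j)
  then obtain m1 where m1: "\<forall>M\<ge>m1. \<forall>i\<le>j. R i M" by auto
  from Suc.prems obtain m2 where m2: "\<forall>M\<ge>m2. R (Suc j) M" by auto
  show ?case
  proof (rule exI[of _ "max m1 m2"], intro allI impI)
    fix M i assume "max m1 m2 \<le> M" "i \<le> Suc j"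
    then have "m1 \<le> M" "m2 \<le> M" "i \<le> j \<or> i = Suc j" by auto
    then show "R i M" using m1 m2 by blast
  qed
qed

definition WU :: "((nat \<Rightarrow> 'a set) \<Rightarrow> bool) \<Rightarrow> ((nat \<Rightarrow> 'a set) \<Rightarrow> bool) \<Rightarrow> (nat \<Rightarrow> 'a set) \<Rightarrow> bool" where
  "WU P Q w \<longleftrightarrow> (\<forall>n. P (sfx n w)) \<or> (\<exists>i. Q (sfx i w) \<and> (\<forall>n<i. P (sfx n w)))"

lemma safe_wu:
  assumes sP: "safeP AP P" and sQ: "safeP AP Q"
  shows "safeP AP (WU P Q)"
proof -
  { fix w assume w: "\<forall>n. w n \<subseteq> AP"
      and ext: "\<And>i. i > 0 \<Longrightarrow> \<exists>u. (\<forall>n. u n \<subseteq> AP) \<and> WU P Q (conc w i u)"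
      and nW: "\<not> WU P Q w"
    then have "\<exists>j. \<not> P (sfx j w)" unfolding WU_def by blast
    then obtain j where j: "\<not> P (sfx j w)" and jmin: "\<forall>n<j. P (sfx n w)"
      using exists_least_iff[of "\<lambda>j. \<not> P (sfx j w)"] by blast
    have nQ: "\<forall>i\<le>j. \<not> Q (sfx i w)"
    proof (intro allI impI notI)
      fix i assume "i \<le> j" "Q (sfx i w)"
      then have "\<forall>n<i. P (sfx n w)" using jmin by simp
      then show False using nW \<open>Q (sfx i w)\<close> unfolding WU_def by blast
    qed
    obtain m0 where m0: "\<forall>M\<ge>m0. \<forall>u. (\<forall>n. u n \<subseteq> AP) \<longrightarrow> \<not> P (sfx j (conc w M u))"
      using bad[OF safe_sfx[OF sP, of j] w] j by blast
    have "\<forall>i\<le>j. \<exists>m. \<forall>M\<ge>m. \<forall>u. (\<forall>n. u n \<subseteq> AP) \<longrightarrow> \<not> Q (sfx i (conc w M u))"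
      using bad[OF safe_sfx[OF sQ] w] nQ by blast
    from fin_comb[OF this] obtain m1 where
      m1: "\<forall>M\<ge>m1. \<forall>i\<le>j. \<forall>u. (\<forall>n. u n \<subseteq> AP) \<longrightarrow> \<not> Q (sfx i (conc w M u))" by blast
    define M where "M = Suc (max m0 m1)"
    obtain u where u: "\<forall>n. u n \<subseteq> AP" and W: "WU P Q (conc w M u)"
      using ext[of M] unfolding M_def by blast
    have "m0 \<le> M" "m1 \<le> M" unfolding M_def by auto
    have a: "\<not> P (sfx j (conc w M u))" using m0 \<open>m0 \<le> M\<close> u by blast
    have b: "\<forall>i\<le>j. \<not> Q (sfx i (conc w M u))" using m1[rule_format, OF \<open>m1 \<le> M\<close>] u by blast
    have "False" using W unfolding WU_def
    proof
      assume "\<forall>n. P (sfx n (conc w M u))" then show False using a by blast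
    next
      assume "\<exists>i. Q (sfx i (conc w M u)) \<and> (\<forall>n<i. P (sfx n (conc w M u)))"
      then obtain i where i: "Q (sfx i (conc w M u))" "\<forall>n<i. P (sfx n (conc w M u))" by blast
      show False
      proof (cases "i \<le> j")
        case True then show False using b i by blast
      next
        case False then have "j < i" by simp
        then show False using i a by blast
      qed
    qed
  }
  then show ?thesis by (intro safeI) blast
qed


context
  fixes K :: "'k vmon"
  assumes I: "idem_ordered_tgp K"
begin

lemma cmD1:
  "\<forall>a b c. vplus K (vplus K a b) c = vplus K a (vplus K b c)"
  using I unfolding idem_ordered_tgp_def complete_monoid_def by (elim conjE) assumption

lemma cmD2:
  "\<forall>a b. vplus K a b = vplus K b a"
  using I unfolding idem_ordered_tgp_def complete_monoid_def by (elim conjE) assumption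

lemma cmD3:
  "\<forall>a. vplus K a (vzero K) = a"
  using I unfolding idem_ordered_tgp_def complete_monoid_def by (elim conjE) assumption

lemma cmD4:
  "\<forall>f. vsum K f {} = vzero K"
  using I unfolding idem_ordered_tgp_def complete_monoid_def by (elim conjE) assumption

lemma cmD5:
  "\<forall>f x. vsum K f {x} = f x"
  using I unfolding idem_ordered_tgp_def complete_monoid_def by (elim conjE) assumption

lemma cmD6:
  "\<forall>f x y. x \<noteq> y \<longrightarrow> vsum K f {x, y} = vplus K (f x) (f y)"
  using I unfolding idem_ordered_tgp_def complete_monoid_def by (elim conjE) assumption

lemma cmD7:
  "\<forall>f g I. (\<forall>x\<in>I. f x = g x) \<longrightarrow> vsum K f I = vsum K g I"
  using I unfolding idem_ordered_tgp_def complete_monoid_def by (elim conjE) assumption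

lemma cmD8:
  "\<forall>f (J :: idx set) (P :: idx \<Rightarrow> idx set).
        (\<forall>i\<in>J. \<forall>j\<in>J. i \<noteq> j \<longrightarrow> P i \<inter> P j = {}) \<longrightarrow>
        vsum K (\<lambda>j. vsum K f (P j)) J = vsum K f (\<Union>j\<in>J. P j)"
  using I unfolding idem_ordered_tgp_def complete_monoid_def by (elim conjE) assumption

lemma tgD1:
  "\<forall>a. vplus K a a = a"
  using I unfolding idem_ordered_tgp_def by (elim conjE) assumption

lemma tgD2:
  "\<forall>a b. vle K a b \<or> vle K b a"
  using I unfolding idem_ordered_tgp_def by (elim conjE) assumption

lemma tgD3:
  "\<forall>a. vmult K (vzero K) a = vzero K \<and> vmult K a (vzero K) = vzero K"
  using I unfolding idem_ordered_tgp_def by (elim conjE) assumption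

lemma tgD4:
  "\<forall>a. vmult K (vone K) a = a \<and> vmult K a (vone K) = a"
  using I unfolding idem_ordered_tgp_def by (elim conjE) assumption

lemma tgD5:
  "\<forall>s. fin_valued s \<and> (\<exists>i. s i = vzero K) \<longrightarrow> vval K s = vzero K"
  using I unfolding idem_ordered_tgp_def by (elim conjE) assumption

lemma tgD6:
  "vval K (\<lambda>_. vone K) = vone K"
  using I unfolding idem_ordered_tgp_def by (elim conjE) assumption

lemma tgD7:
  "\<forall>c I. vsum K (\<lambda>_. vmult K c (vone K)) I = vmult K c (vsum K (\<lambda>_. vone K) I)"
  using I unfolding idem_ordered_tgp_def by (elim conjE) assumption

lemma tgD8:
  "\<forall>c. vle K c (vone K)"
  using I unfolding idem_ordered_tgp_def by (elim conjE) assumption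

lemma tgD9:
  "\<forall>s c. fin_valued s \<and> (\<forall>i. vle K c (s i)) \<longrightarrow> vle K c (vval K s)"
  using I unfolding idem_ordered_tgp_def by (elim conjE) assumption

lemma ax_assoc: "vplus K (vplus K a b) c = vplus K a (vplus K b c)"
  using cmD1 by blast
lemma ax_comm: "vplus K a b = vplus K b a"
  using cmD2 by blast
lemma ax_zero: "vplus K a (vzero K) = a"
  using cmD3 by blast
lemma ax_single: "vsum K f {x} = f x"
  using cmD5 by blast
lemma ax_pair: "x \<noteq> y \<Longrightarrow> vsum K f {x, y} = vplus K (f x) (f y)"
  using cmD6 by blast
lemma ax_cong: "(\<forall>x\<in>A. f x = g x) \<Longrightarrow> vsum K f A = vsum K g A"
  using cmD7 by blast
lemma ax_part: "(\<forall>i\<in>J. \<forall>j\<in>J. i \<noteq> j \<longrightarrow> P i \<inter> P j = {}) \<Longrightarrow>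
        vsum K (\<lambda>j. vsum K f (P j)) J = vsum K f (\<Union>j\<in>J. P j)"
  using cmD8 by blast
lemma ax_idem: "vplus K a a = a"
  using tgD1 by blast
lemma ax_total: "vle K a b \<or> vle K b a"
  using tgD2 by blast
lemma ax_mz: "vmult K (vzero K) a = vzero K" "vmult K a (vzero K) = vzero K"
  using tgD3 by blast+
lemma ax_m1: "vmult K (vone K) a = a" "vmult K a (vone K) = a"
  using tgD4 by blast+
lemma ax_valz: "fin_valued s \<Longrightarrow> s i = vzero K \<Longrightarrow> vval K s = vzero K"
  using tgD5 by blast
lemma ax_val1: "vval K (\<lambda>_. vone K) = vone K"
  using tgD6 by blast
lemma ax_sumc: "vsum K (\<lambda>_. vmult K c (vone K)) A = vmult K c (vsum K (\<lambda>_. vone K) A)"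
  using tgD7 by blast
lemma ax_le1: "vle K c (vone K)"
  using tgD8 by blast
lemma ax_lb: "fin_valued s \<Longrightarrow> \<forall>i. vle K c (s i) \<Longrightarrow> vle K c (vval K s)"
  using tgD9 by blast

lemma le_trans: "vle K a b \<Longrightarrow> vle K b c \<Longrightarrow> vle K a c"
  unfolding vle_def by (metis ax_assoc)
lemma le_antisym: "vle K a b \<Longrightarrow> vle K b a \<Longrightarrow> a = b"
  unfolding vle_def by (metis ax_comm)
lemma le_plus: "vle K a (vplus K a b)"
  unfolding vle_def by (metis ax_assoc ax_comm ax_idem)
lemma le_zero_iff: "vle K k (vzero K) \<longleftrightarrow> k = vzero K"
  unfolding vle_def by (metis ax_comm ax_zero)
lemma zero_plus: "vplus K (vzero K) a = a"
  by (metis ax_comm ax_zero)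

lemma le_plus_iff: "vle K k (vplus K a b) \<longleftrightarrow> vle K k a \<or> vle K k b"
proof
  assume h: "vle K k (vplus K a b)"
  show "vle K k a \<or> vle K k b"
  proof (cases "vle K a b")
    case True
    then have "vplus K a b = b" unfolding vle_def by (metis ax_comm)
    then show ?thesis using h by simp
  next
    case False
    then have "vle K b a" using ax_total by blast
    then have "vplus K a b = a" unfolding vle_def by metis
    then show ?thesis using h by simp
  qed
next
  assume "vle K k a \<or> vle K k b"
  then show "vle K k (vplus K a b)"
    by (metis le_plus le_trans ax_comm)
qed

lemma sum_zero: "(\<forall>x\<in>A. f x = vzero K) \<Longrightarrow> vsum K f A = vzero K"
proof -
  assume "\<forall>x\<in>A. f x = vzero K"
  then have "vsum K f A = vsum K (\<lambda>_. vmult K (vzero K) (vone K)) A"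
    by (intro ax_cong) (simp add: ax_mz)
  also have "\<dots> = vzero K" by (rule trans[OF ax_sumc], rule ax_mz(1))
  finally show ?thesis .
qed

lemma sum_ge:
  assumes "x \<in> A" shows "vle K (f x) (vsum K f A)"
proof -
  define a :: idx where "a = (\<lambda>_. 0)"
  define b :: idx where "b = (\<lambda>_. 1)"
  have ab: "a \<noteq> b" unfolding a_def b_def by (simp add: fun_eq_iff)
  define P where "P = (\<lambda>j. if j = a then {x} else A - {x})"
  have "vsum K (\<lambda>j. vsum K f (P j)) {a, b} = vsum K f (\<Union>j\<in>{a,b}. P j)"
    by (rule ax_part) (use ab in \<open>auto simp: P_def\<close>)
  moreover have "(\<Union>j\<in>{a,b}. P j) = A" using assms ab by (auto simp: P_def)
  moreover have "vsum K (\<lambda>j. vsum K f (P j)) {a, b} = vplus K (f x) (vsum K f (A - {x}))"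
    using ab by (simp add: ax_pair ax_single P_def)
  ultimately show ?thesis using le_plus by metis
qed

lemma nsum_zero: "(\<forall>i\<in>A. f i = vzero K) \<Longrightarrow> nsum K f A = vzero K"
  unfolding nsum_def by (rule sum_zero) auto

lemma nsum_ge: "i \<in> A \<Longrightarrow> vle K (f i) (nsum K f A)"
  unfolding nsum_def using sum_ge[of "\<lambda>_. i" "(\<lambda>n. \<lambda>_::nat. n) ` A" "\<lambda>x. f (x 0)"] by simp

definition zk :: "'k \<Rightarrow> 'k \<Rightarrow> bool" where
  "zk k x \<longleftrightarrow> x = vzero K \<or> vle K k x"

lemma val_char:
  assumes "k \<noteq> vzero K" "fin_valued s" "\<forall>i. zk k (s i)"
  shows "zk k (vval K s) \<and> (vle K k (vval K s) \<longleftrightarrow> (\<forall>i. vle K k (s i)))"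
proof (cases "\<forall>i. vle K k (s i)")
  case True
  then show ?thesis using ax_lb[OF assms(2)] unfolding zk_def by blast
next
  case False
  then obtain i where "s i = vzero K" using assms(3) unfolding zk_def by blast
  then have "vval K s = vzero K" using ax_valz[OF assms(2)] by blast
  then show ?thesis using False le_zero_iff assms(1) unfolding zk_def by simp
qed

lemma nsum_char:
  assumes "k \<noteq> vzero K" "\<forall>i\<in>A. zk k (f i)"
  shows "zk k (nsum K f A) \<and> (vle K k (nsum K f A) \<longleftrightarrow> (\<exists>i\<in>A. vle K k (f i)))"
proof (cases "\<exists>i\<in>A. vle K k (f i)")
  case True
  then show ?thesis using nsum_ge le_trans unfolding zk_def by blast
next
  case False
  then have "nsum K f A = vzero K" using assms(2) nsum_zero unfolding zk_def by blast
  then show ?thesis using False le_zero_iff assms(1) unfolding zk_def by simp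
qed

lemma finval: "finite V \<Longrightarrow> \<forall>n. s n \<in> V \<Longrightarrow> fin_valued s"
proof -
  assume "finite V" "\<forall>n. s n \<in> V"
  then have "range s \<subseteq> V" by auto
  then show ?thesis using \<open>finite V\<close> finite_subset unfolding fin_valued_def by blast
qed

lemma val01:
  assumes "\<forall>n. s n = vzero K \<or> s n = vone K"
  shows "vval K s = vzero K \<or> vval K s = vone K"
proof -
  have fv: "fin_valued s" by (rule finval[of "{vzero K, vone K}"]) (use assms in auto)
  show ?thesis
  proof (cases "\<exists>n. s n = vzero K")
    case True then show ?thesis using ax_valz[OF fv] by blast
  next
    case False
    then have "s = (\<lambda>_. vone K)" using assms by (auto simp: fun_eq_iff)
    then show ?thesis using ax_val1 by simp
  qed
qed

lemma nsum01:
  assumes "\<forall>i\<in>A. f i = vzero K \<or> f i = vone K"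
  shows "nsum K f A = vzero K \<or> nsum K f A = vone K"
proof (cases "\<exists>i\<in>A. f i = vone K")
  case True
  then obtain i where "i \<in> A" "f i = vone K" by blast
  then have "vle K (vone K) (nsum K f A)" using nsum_ge by metis
  then have "nsum K f A = vone K" using ax_le1 le_antisym by metis
  then show ?thesis by simp
next
  case False
  then show ?thesis using assms nsum_zero by metis
qed

lemma plus01:
  "x = vzero K \<or> x = vone K \<Longrightarrow> y = vzero K \<or> y = vone K \<Longrightarrow>
   vplus K x y = vzero K \<or> vplus K x y = vone K"
  using ax_zero zero_plus ax_idem by auto

lemma mult01:
  "x = vzero K \<or> x = vone K \<Longrightarrow> y = vzero K \<or> y = vone K \<Longrightarrow>
   vmult K x y = vzero K \<or> vmult K x y = vone K"
  using ax_mz ax_m1 by auto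

definition Bv :: "('k, 'a) ltl \<Rightarrow> bool" where
  "Bv \<phi> \<longleftrightarrow> (\<forall>w. sem K \<phi> w = vzero K \<or> sem K \<phi> w = vone K)"

lemma B_sb: "\<phi> \<in> sbLTL K AP \<Longrightarrow> Bv \<phi>"
proof (induction rule: sbLTL.induct)
  case sb_true then show ?case by (simp add: Bv_def ltrue_def)
next
  case (sb_atom a) then show ?case by (simp add: Bv_def)
next
  case (sb_natom a) then show ?case by (simp add: Bv_def)
next
  case (sb_or \<phi> \<psi>) then show ?case unfolding Bv_def using plus01 by simp
next
  case (sb_and \<phi> \<psi>) then show ?case unfolding Bv_def using mult01 by simp
next
  case (sb_next \<phi>) then show ?case unfolding Bv_def by simp
next
  case (sb_rU \<phi> \<psi>)
  have bx: "sem K (Box \<phi>) w = vzero K \<or> sem K (Box \<phi>) w = vone K" for w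
    using sb_rU.IH(1) unfolding Bv_def by (simp add: val01)
  have un: "sem K (Until \<phi> \<psi>) w = vzero K \<or> sem K (Until \<phi> \<psi>) w = vone K" for w
  proof -
    have "\<forall>i\<in>UNIV. vval K (\<lambda>n. if n < i then sem K \<phi> (sfx n w)
                              else if n = i then sem K \<psi> (sfx i w) else vone K) = vzero K
          \<or> vval K (\<lambda>n. if n < i then sem K \<phi> (sfx n w)
                              else if n = i then sem K \<psi> (sfx i w) else vone K) = vone K"
      using sb_rU.IH unfolding Bv_def by (intro ballI val01) auto
    then show ?thesis by (simp add: nsum01)
  qed
  show ?case unfolding Bv_def rU_def using bx un plus01 by (metis sem.simps(4))
next
  case (sb_box \<phi>) then show ?case unfolding Bv_def by (simp add: val01)
qed

context
  fixes AP :: "'a set" and k :: 'k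
  assumes k0: "k \<noteq> vzero K"
begin

lemma nle0: "\<not> vle K k (vzero K)"
  using le_zero_iff k0 by blast

definition Fv :: "('k, 'a) ltl \<Rightarrow> bool" where
  "Fv \<phi> \<longleftrightarrow> (\<exists>V. finite V \<and> (\<forall>w. sem K \<phi> w \<in> V))"

definition Gv :: "('k, 'a) ltl \<Rightarrow> bool" where
  "Gv \<phi> \<longleftrightarrow> (\<forall>w. zk k (sem K \<phi> w)) \<and> safeP AP (\<lambda>w. vle K k (sem K \<phi> w))"

lemma B_F: "Bv \<phi> \<Longrightarrow> Fv \<phi>"
  unfolding Bv_def Fv_def by (intro exI[of _ "{vzero K, vone K}"]) auto

lemma zk_plus: "zk k x \<Longrightarrow> zk k y \<Longrightarrow> zk k (vplus K x y)"
  unfolding zk_def using le_plus_iff ax_zero by metis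

lemma G_or: "Gv \<phi> \<Longrightarrow> Gv \<psi> \<Longrightarrow> Gv (Or \<phi> \<psi>)"
  unfolding Gv_def by (simp add: zk_plus le_plus_iff safe_or)

lemma F_or: "Fv \<phi> \<Longrightarrow> Fv \<psi> \<Longrightarrow> Fv (Or \<phi> \<psi>)"
proof -
  assume "Fv \<phi>" "Fv \<psi>"
  then obtain V1 V2 where "finite V1" "\<forall>w. sem K \<phi> w \<in> V1" "finite V2" "\<forall>w. sem K \<psi> w \<in> V2"
    unfolding Fv_def by blast
  then show ?thesis unfolding Fv_def
    by (intro exI[of _ "(\<lambda>(a, b). vplus K a b) ` (V1 \<times> V2)"]) auto
qed

lemma G_const: "vle K k c \<Longrightarrow> Gv (Const c)"
  unfolding Gv_def zk_def by (simp add: safe_true)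

lemma G_and:
  assumes "Bv \<phi>" "Gv \<phi>" "Gv \<psi>"
  shows "Gv (And \<phi> \<psi>)" "Gv (And \<psi> \<phi>)"
proof -
  have m1: "vmult K (sem K \<phi> w) x = (if vle K k (sem K \<phi> w) then x else vzero K)" for w x
    using assms(1) unfolding Bv_def using ax_m1 ax_mz ax_le1 nle0 by metis
  have m2: "vmult K x (sem K \<phi> w) = (if vle K k (sem K \<phi> w) then x else vzero K)" for w x
    using assms(1) unfolding Bv_def using ax_m1 ax_mz ax_le1 nle0 by metis
  have z: "zk k (vzero K)" unfolding zk_def by simp
  have e1: "(\<lambda>w. vle K k (sem K (And \<phi> \<psi>) w)) = (\<lambda>w. vle K k (sem K \<phi> w) \<and> vle K k (sem K \<psi> w))"
    using m1 nle0 by (auto simp: fun_eq_iff)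
  have e2: "(\<lambda>w. vle K k (sem K (And \<psi> \<phi>) w)) = (\<lambda>w. vle K k (sem K \<phi> w) \<and> vle K k (sem K \<psi> w))"
    using m2 nle0 by (auto simp: fun_eq_iff)
  have s: "safeP AP (\<lambda>w. vle K k (sem K \<phi> w) \<and> vle K k (sem K \<psi> w))"
    using assms(2,3) unfolding Gv_def by (intro safe_and) auto
  show "Gv (And \<phi> \<psi>)" unfolding Gv_def
    using e1 s m1 z assms(3) unfolding Gv_def by (simp del: sem.simps add: sem.simps(5))
  show "Gv (And \<psi> \<phi>)" unfolding Gv_def
    using e2 s m2 z assms(3) unfolding Gv_def by (simp del: sem.simps add: sem.simps(5))
qed

lemma G_next: "Gv \<phi> \<Longrightarrow> Gv (Next \<phi>)"
  unfolding Gv_def using safe_sfx[where P="\<lambda>w. vle K k (sem K \<phi> w)" and j=1 and AP=AP] by simp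

lemma box_char:
  assumes "Fv \<phi>" "\<forall>w. zk k (sem K \<phi> w)"
  shows "zk k (sem K (Box \<phi>) w) \<and> (vle K k (sem K (Box \<phi>) w) \<longleftrightarrow> (\<forall>i. vle K k (sem K \<phi> (sfx i w))))"
proof -
  obtain V where "finite V" "\<forall>w. sem K \<phi> w \<in> V" using assms(1) unfolding Fv_def by blast
  then have "fin_valued (\<lambda>i. sem K \<phi> (sfx i w))" by (intro finval[of V]) auto
  then show ?thesis using val_char[OF k0] assms(2) by simp
qed

lemma until_char:
  assumes "Fv \<phi>" "\<forall>w. zk k (sem K \<phi> w)" "Fv \<psi>" "\<forall>w. zk k (sem K \<psi> w)"
  shows "zk k (sem K (Until \<phi> \<psi>) w) \<and> (vle K k (sem K (Until \<phi> \<psi>) w) \<longleftrightarrow>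
     (\<exists>i. vle K k (sem K \<psi> (sfx i w)) \<and> (\<forall>n<i. vle K k (sem K \<phi> (sfx n w)))))"
proof -
  obtain V1 where V1: "finite V1" "\<forall>w. sem K \<phi> w \<in> V1" using assms(1) unfolding Fv_def by blast
  obtain V2 where V2: "finite V2" "\<forall>w. sem K \<psi> w \<in> V2" using assms(3) unfolding Fv_def by blast
  define sq where "sq = (\<lambda>i n. if n < i then sem K \<phi> (sfx n w)
                              else if n = i then sem K \<psi> (sfx i w) else vone K)"
  have fv: "fin_valued (sq i)" for i
    by (rule finval[of "V1 \<union> V2 \<union> {vone K}"]) (use V1 V2 in \<open>auto simp: sq_def\<close>)
  have zq: "\<forall>n. zk k (sq i n)" for i
    using assms(2,4) ax_le1 unfolding sq_def zk_def by auto
  have vc: "zk k (vval K (sq i)) \<and> (vle K k (vval K (sq i)) \<longleftrightarrow> (\<forall>n. vle K k (sq i n)))" for i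
    using val_char[OF k0 fv zq] .
  have eq: "(\<forall>n. vle K k (sq i n)) \<longleftrightarrow> vle K k (sem K \<psi> (sfx i w)) \<and> (\<forall>n<i. vle K k (sem K \<phi> (sfx n w)))" for i
  proof
    assume h: "\<forall>n. vle K k (sq i n)"
    show "vle K k (sem K \<psi> (sfx i w)) \<and> (\<forall>n<i. vle K k (sem K \<phi> (sfx n w)))"
    proof
      show "vle K k (sem K \<psi> (sfx i w))" using h[rule_format, of i] by (simp add: sq_def)
      show "\<forall>n<i. vle K k (sem K \<phi> (sfx n w))"
      proof (intro allI impI)
        fix n assume "n < i" then show "vle K k (sem K \<phi> (sfx n w))" using h[rule_format, of n] by (simp add: sq_def)
      qed
    qed
  next
    assume "vle K k (sem K \<psi> (sfx i w)) \<and> (\<forall>n<i. vle K k (sem K \<phi> (sfx n w)))"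
    then show "\<forall>n. vle K k (sq i n)" using ax_le1 by (auto simp: sq_def)
  qed
  have u: "sem K (Until \<phi> \<psi>) w = nsum K (\<lambda>i. vval K (sq i)) UNIV" by (simp add: sq_def)
  have "\<forall>i\<in>UNIV. zk k (vval K (sq i))" using vc by blast
  from nsum_char[OF k0 this] show ?thesis unfolding u using vc eq by simp
qed

lemma G_box: "Fv \<phi> \<Longrightarrow> Gv \<phi> \<Longrightarrow> Gv (Box \<phi>)"
proof -
  assume F: "Fv \<phi>" and G: "Gv \<phi>"
  then have z: "\<forall>w. zk k (sem K \<phi> w)" unfolding Gv_def by blast
  have e: "(\<lambda>w. vle K k (sem K (Box \<phi>) w)) = (\<lambda>w. \<forall>i. vle K k (sem K \<phi> (sfx i w)))"
    using box_char[OF F z] by (simp add: fun_eq_iff del: sem.simps)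
  have "safeP AP (\<lambda>w. \<forall>i. vle K k (sem K \<phi> (sfx i w)))"
    using G unfolding Gv_def by (intro safe_all safe_sfx) blast
  then show ?thesis unfolding Gv_def e using box_char[OF F z] by blast
qed

lemma G_rU:
  assumes "Fv \<phi>" "Gv \<phi>" "Fv \<psi>" "Gv \<psi>"
  shows "Gv (rU \<phi> \<psi>)"
proof -
  have z1: "\<forall>w. zk k (sem K \<phi> w)" and z2: "\<forall>w. zk k (sem K \<psi> w)"
    using assms unfolding Gv_def by blast+
  note bc = box_char[OF assms(1) z1]
  note uc = until_char[OF assms(1) z1 assms(3) z2]
  have e: "(\<lambda>w. vle K k (sem K (rU \<phi> \<psi>) w)) = WU (\<lambda>w. vle K k (sem K \<phi> w)) (\<lambda>w. vle K k (sem K \<psi> w))"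
    unfolding fun_eq_iff rU_def WU_def sem.simps(4) le_plus_iff using bc uc by blast
  have "safeP AP (WU (\<lambda>w. vle K k (sem K \<phi> w)) (\<lambda>w. vle K k (sem K \<psi> w)))"
    using assms(2,4) unfolding Gv_def by (intro safe_wu) blast+
  moreover have "zk k (sem K (rU \<phi> \<psi>) w)" for w
    unfolding rU_def sem.simps(4) using zk_plus bc uc by blast
  ultimately show ?thesis unfolding Gv_def e by blast
qed

lemma G_sb: "\<phi> \<in> sbLTL K AP \<Longrightarrow> Gv \<phi>"
proof (induction rule: sbLTL.induct)
  case sb_true then show ?case unfolding ltrue_def by (rule G_const[OF ax_le1])
next
  case (sb_atom a)
  have "(\<lambda>w. vle K k (sem K (Atom a) w)) = (\<lambda>w. a \<in> w 0)" using ax_le1 nle0 by (auto simp: fun_eq_iff)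
  then show ?case unfolding Gv_def zk_def using safe_atom ax_le1 by simp
next
  case (sb_natom a)
  have "(\<lambda>w. vle K k (sem K (NAtom a) w)) = (\<lambda>w. a \<notin> w 0)" using ax_le1 nle0 by (auto simp: fun_eq_iff)
  then show ?case unfolding Gv_def zk_def using safe_natom ax_le1 by simp
next
  case (sb_or \<phi> \<psi>) then show ?case using G_or by blast
next
  case (sb_and \<phi> \<psi>) then show ?case using G_and(1) B_sb by blast
next
  case (sb_next \<phi>) then show ?case using G_next by blast
next
  case (sb_rU \<phi> \<psi>) then show ?case using G_rU B_F B_sb by blast
next
  case (sb_box \<phi>) then show ?case using G_box B_F B_sb by blast
qed

lemma FG_st: "\<phi> \<in> stLTL K AP k \<Longrightarrow> Fv \<phi> \<and> Gv \<phi>"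
proof (induction rule: stLTL.induct)
  case (st_base c \<phi>)
  then have c: "vle K k c" unfolding Lk_def by blast
  have B: "Bv \<phi>" using B_sb[OF st_base(2)] .
  have "Gv (And (Const c) \<phi>)" using G_and(2)[OF B G_sb[OF st_base(2)] G_const[OF c]] .
  moreover have "Fv (And (Const c) \<phi>)" unfolding Fv_def
  proof (intro exI[of _ "{vzero K, c}"] conjI allI)
    fix w show "sem K (And (Const c) \<phi>) w \<in> {vzero K, c}"
      using B unfolding Bv_def using ax_mz(2) ax_m1(2) by (metis insertCI sem.simps(1) sem.simps(5))
  qed simp
  ultimately show ?case by blast
next
  case (st_or \<phi> \<psi>) then show ?case using F_or G_or by blast
qed

lemma G_psi:
  assumes "\<psi> \<in> stLTL K AP k
     \<or> (\<exists>\<xi> \<zeta>. \<xi> \<in> stLTL K AP k \<and> \<zeta> \<in> stLTL K AP k \<and> \<psi> = rU \<xi> \<zeta>)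
     \<or> (\<exists>\<xi>. \<xi> \<in> stLTL K AP k \<and> \<psi> = Box \<xi>)"
  shows "Gv \<psi>"
  using assms FG_st G_rU G_box by blast

lemma main: "\<phi> \<in> tRULTL K AP k \<Longrightarrow> safeP AP (\<lambda>w. vle K k (sem K \<phi> w))"
proof (induction rule: tRULTL.induct)
  case (t_const c) then show ?case unfolding Lk_def by (simp add: safe_true)
next
  case (t_sb \<phi>) then show ?case using G_sb unfolding Gv_def by blast
next
  case (t_st \<phi>) then show ?case using FG_st unfolding Gv_def by blast
next
  case (t_next \<phi>) then show ?case
    using safe_sfx[where P="\<lambda>w. vle K k (sem K \<phi> w)" and j=1 and AP=AP] by simp
next
  case (t_or \<phi> \<psi>) then show ?case by (simp add: le_plus_iff safe_or)
next
  case (t_and1 \<phi> \<psi>) then show ?case using G_and(1)[OF B_sb G_sb G_psi] unfolding Gv_def by blast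
next
  case (t_and2 \<phi> \<psi>) then show ?case using G_and(2)[OF B_sb G_sb G_psi] unfolding Gv_def by blast
next
  case (t_rU \<phi> \<psi>) then show ?case using G_rU FG_st unfolding Gv_def by blast
next
  case (t_box \<phi>) then show ?case using G_box FG_st unfolding Gv_def by blast
qed

end

end

theorem theorem6:
  fixes K :: "'k vmon" and AP :: "'a set" and k :: 'k and \<phi> :: "('k, 'a) ltl"
  assumes "idem_ordered_tgp K"
    and "finite AP"
    and "k \<noteq> vzero K" and "k \<noteq> vone K"
    and "\<phi> \<in> tRULTL K AP k"
  shows "k_safe K AP k (sem K \<phi>)"
  using main[OF assms(1) assms(3) assms(5)] unfolding k_safe_def safeP_def by simp

end
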